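(* Let $a_1,\dots,a_t$ be positive integers and $I=\langle x_1^{a_1},\dots,x_t^{a_t}\rangle\subset S=K[x_1,\dots,x_t]$. Then $v(I^{n+1})=v(I)+n\,\alpha(I)$ for all $n\ge 1$.
   Context: $K$ is a field and $S$ is standard graded. For a proper graded ideal $J$, the $v$-number is $v(J)=\min\{k\ge 0 : \exists f\in S_k,\ \mathcal P\in\operatorname{Ass}(S/J) \text{ with } (J:f)=\mathcal P\}$. $\alpha(I)=\min\{\deg f : f\in I\setminus\{0\} \text{ homogeneous}\}$. *)

theory Defs
  imports "HOL-Library.Poly_Mapping"
begin

text \<open>Polynomial ring S = K[x_v : v in 'v] (variables indexed by a finite type 'v,
  so t = CARD('v)): polynomials are finitely supported maps from monomials
  (finitely supported exponent vectors) to coefficients in K.\<close>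

type_synonym ('v, 'k) mpoly = "('v \<Rightarrow>\<^sub>0 nat) \<Rightarrow>\<^sub>0 'k"

definition mon_deg :: "('v \<Rightarrow>\<^sub>0 nat) \<Rightarrow> nat" where
  "mon_deg m = (\<Sum>v\<in>Poly_Mapping.keys m. Poly_Mapping.lookup m v)"

text \<open>Homogeneous of degree k (the zero polynomial belongs to every S_k).\<close>
definition homogeneous_of :: "nat \<Rightarrow> ('v, 'k::zero) mpoly \<Rightarrow> bool" where
  "homogeneous_of k f \<longleftrightarrow> (\<forall>m\<in>Poly_Mapping.keys f. mon_deg m = k)"

definition is_ideal :: "'a::comm_ring_1 set \<Rightarrow> bool" where
  "is_ideal J \<longleftrightarrow> 0 \<in> J \<and> (\<forall>a\<in>J. \<forall>b\<in>J. a + b \<in> J) \<and> (\<forall>r. \<forall>a\<in>J. r * a \<in> J)"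

definition ideal_gen :: "'a::comm_ring_1 set \<Rightarrow> 'a set" where
  "ideal_gen G = \<Inter>{J. is_ideal J \<and> G \<subseteq> J}"

definition ideal_pow :: "'a::comm_ring_1 set \<Rightarrow> nat \<Rightarrow> 'a set" where
  "ideal_pow I n = ideal_gen {prod_list xs | xs. length xs = n \<and> set xs \<subseteq> I}"

definition ideal_colon :: "'a::comm_ring_1 set \<Rightarrow> 'a \<Rightarrow> 'a set" where
  "ideal_colon J f = {g. g * f \<in> J}"

definition prime_ideal :: "'a::comm_ring_1 set \<Rightarrow> bool" where
  "prime_ideal P \<longleftrightarrow> is_ideal P \<and> P \<noteq> UNIV \<and> (\<forall>a b. a * b \<in> P \<longrightarrow> a \<in> P \<or> b \<in> P)"

definition Ass :: "'a::comm_ring_1 set \<Rightarrow> 'a set set" where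
  "Ass J = {P. prime_ideal P \<and> (\<exists>f. ideal_colon J f = P)}"

definition v_number :: "('v, 'k::field) mpoly set \<Rightarrow> nat" where
  "v_number J = (LEAST k. \<exists>f P. homogeneous_of k f \<and> P \<in> Ass J \<and> ideal_colon J f = P)"

definition alpha_ideal :: "('v, 'k::field) mpoly set \<Rightarrow> nat" where
  "alpha_ideal I = (LEAST d. \<exists>f\<in>I. f \<noteq> 0 \<and> homogeneous_of d f)"

definition var_pow :: "'v \<Rightarrow> nat \<Rightarrow> ('v, 'k::field) mpoly" where
  "var_pow v e = Poly_Mapping.single (Poly_Mapping.single v e) 1"

end

theory Submission
  imports Defs
begin
lemma is_ideal_gen: "is_ideal (ideal_gen G)"
  unfolding is_ideal_def ideal_gen_def by auto

lemma gen_subset: "G \<subseteq> ideal_gen G"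
  unfolding ideal_gen_def by auto

lemma gen_least: "is_ideal J \<Longrightarrow> G \<subseteq> J \<Longrightarrow> ideal_gen G \<subseteq> J"
  unfolding ideal_gen_def by auto

lemma ideal_sum: "finite A \<Longrightarrow> is_ideal J \<Longrightarrow> (\<forall>x\<in>A. f x \<in> J) \<Longrightarrow> sum f A \<in> J"
  by (induction A rule: finite_induct) (auto simp: is_ideal_def)

lemma ideal_mult: "is_ideal J \<Longrightarrow> x \<in> J \<Longrightarrow> r * x \<in> J"
  by (auto simp: is_ideal_def)

lemma poly_expansion:
  "(f :: ('a::comm_monoid_add) \<Rightarrow>\<^sub>0 'b::comm_monoid_add) = (\<Sum>m\<in>Poly_Mapping.keys f. Poly_Mapping.single m (Poly_Mapping.lookup f m))"
proof (rule poly_mapping_eqI)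
  fix k
  show "Poly_Mapping.lookup f k = Poly_Mapping.lookup (\<Sum>m\<in>Poly_Mapping.keys f. Poly_Mapping.single m (Poly_Mapping.lookup f m)) k"
    by (simp add: lookup_sum lookup_single when_def in_keys_iff)
qed

lemma monomial_criterion:
  fixes f :: "('v, 'k::field) mpoly"
  assumes J: "is_ideal J" and h: "\<forall>m\<in>Poly_Mapping.keys f. Poly_Mapping.single m 1 \<in> J"
  shows "f \<in> J"
proof -
  have "f = (\<Sum>m\<in>Poly_Mapping.keys f. Poly_Mapping.single 0 (Poly_Mapping.lookup f m) * Poly_Mapping.single m 1)"
    by (subst poly_expansion) (simp add: mult_single)
  also have "\<dots> \<in> J"
    using J h by (intro ideal_sum) (auto intro: ideal_mult)
  finally show ?thesis .
qed

lemma keys_closed_ideal: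
  assumes "\<And>m w. m \<in> S \<Longrightarrow> w + m \<in> S"
  shows "is_ideal {f :: ('v, 'k::field) mpoly. Poly_Mapping.keys f \<subseteq> S}"
  unfolding is_ideal_def
proof (intro conjI ballI allI)
  fix x y :: "('v, 'k) mpoly" assume "x \<in> {f. Poly_Mapping.keys f \<subseteq> S}" "y \<in> {f. Poly_Mapping.keys f \<subseteq> S}"
  then show "x + y \<in> {f. Poly_Mapping.keys f \<subseteq> S}" using keys_add[of x y] by auto
next
  fix r x :: "('v, 'k) mpoly" assume "x \<in> {f. Poly_Mapping.keys f \<subseteq> S}"
  then show "r * x \<in> {f. Poly_Mapping.keys f \<subseteq> S}" using keys_mult[of r x] assms by blast
qed auto

lemma lookup_single_mult:
  "Poly_Mapping.lookup (Poly_Mapping.single u (c::'k::field) * (g :: ('v, 'k) mpoly)) k =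
     c * (\<Sum>q. Poly_Mapping.lookup g q when k = u + q)"
proof -
  have "Poly_Mapping.lookup (Poly_Mapping.single u c * g) k =
     (\<Sum>l. (c when u = l) * (\<Sum>q. Poly_Mapping.lookup g q when k = l + q))"
    unfolding lookup_mult lookup_single by simp
  also have "\<dots> = (\<Sum>l. (c * (\<Sum>q. Poly_Mapping.lookup g q when k = l + q)) when u = l)"
    by (intro Sum_any.cong) (simp add: when_def)
  also have "\<dots> = c * (\<Sum>q. Poly_Mapping.lookup g q when k = u + q)"
    by (rule Sum_any_when_equal')
  finally show ?thesis .
qed

lemma lookup_single_mult1:
  "Poly_Mapping.lookup (Poly_Mapping.single u (c::'k::field) * (g :: ('v, 'k) mpoly)) (u + m) = c * Poly_Mapping.lookup g m"
  unfolding lookup_single_mult by (simp add: when_def)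

lemma lookup_single_mult2:
  "\<not> (\<exists>m. k = u + m) \<Longrightarrow> Poly_Mapping.lookup (Poly_Mapping.single u (c::'k::field) * (g :: ('v, 'k) mpoly)) k = 0"
proof -
  assume "\<not> (\<exists>m. k = u + m)"
  then have "(\<lambda>q. Poly_Mapping.lookup g q when k = u + q) = (\<lambda>q. 0)" by (auto simp: when_def)
  note h = this
  show ?thesis unfolding lookup_single_mult h by simp
qed

lemma keys_single_mult:
  "Poly_Mapping.keys (Poly_Mapping.single u (1::'k::field) * (g :: ('v, 'k) mpoly)) = (\<lambda>m. u + m) ` Poly_Mapping.keys g"
proof (intro set_eqI iffI)
  fix x assume x: "x \<in> Poly_Mapping.keys (Poly_Mapping.single u (1::'k) * g)"
  then obtain m where m: "x = u + m"
    using lookup_single_mult2[of x u 1 g] by (auto simp: in_keys_iff)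
  then show "x \<in> (\<lambda>m. u + m) ` Poly_Mapping.keys g"
    using x by (auto simp: in_keys_iff lookup_single_mult1)
next
  fix x assume "x \<in> (\<lambda>m. u + m) ` Poly_Mapping.keys g"
  then show "x \<in> Poly_Mapping.keys (Poly_Mapping.single u (1::'k) * g)"
    by (auto simp: in_keys_iff lookup_single_mult1)
qed

definition NN :: "('v::finite \<Rightarrow> nat) \<Rightarrow> ('v \<Rightarrow>\<^sub>0 nat) \<Rightarrow> nat" where
  "NN a m = (\<Sum>v\<in>UNIV. Poly_Mapping.lookup m v div a v)"

definition PI :: "('v::finite \<Rightarrow> nat) \<Rightarrow> nat \<Rightarrow> ('v, 'k::field) mpoly set" where
  "PI a j = {f. \<forall>m\<in>Poly_Mapping.keys f. j \<le> NN a m}"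

lemma div_superadd: "(x::nat) div c + y div c \<le> (x + y) div c"
  by (metis div_add1_eq le_add1)

lemma sum_point:
  assumes "\<forall>v. v \<noteq> i \<longrightarrow> f v = g v"
  shows "(\<Sum>v\<in>UNIV. f v) + g i = (\<Sum>v\<in>UNIV. g v) + (f (i::'v::finite) :: nat)"
proof -
  have "(\<Sum>v\<in>UNIV. f v) = f i + (\<Sum>v\<in>UNIV-{i}. f v)" by (simp add: sum.remove)
  moreover have "(\<Sum>v\<in>UNIV. g v) = g i + (\<Sum>v\<in>UNIV-{i}. g v)" by (simp add: sum.remove)
  moreover have "(\<Sum>v\<in>UNIV-{i}. f v) = (\<Sum>v\<in>UNIV-{i}. g v)" using assms by (intro sum.cong) auto
  ultimately show ?thesis by linarith
qed

lemma NN_add: "NN a m + NN a w \<le> NN a (m + w)"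
  unfolding NN_def lookup_add sum.distrib[symmetric]
  by (intro sum_mono div_superadd)

lemma NN_mono: "(\<forall>v. Poly_Mapping.lookup m v \<le> Poly_Mapping.lookup w v) \<Longrightarrow> NN a m \<le> NN a w"
  unfolding NN_def by (intro sum_mono div_le_mono) auto

lemma NN_zero [simp]: "NN a 0 = 0"
  unfolding NN_def by simp

lemma NN_add_single:
  assumes "a i > 0"
  shows "NN a (m + Poly_Mapping.single i (a i)) = NN a m + 1"
proof -
  have "NN a (m + Poly_Mapping.single i (a i)) + Poly_Mapping.lookup m i div a i
     = NN a m + (Poly_Mapping.lookup m i + a i) div a i"
  proof -
    have "\<forall>v. v \<noteq> i \<longrightarrow> Poly_Mapping.lookup (m + Poly_Mapping.single i (a i)) v div a v = Poly_Mapping.lookup m v div a v"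
      by (auto simp: lookup_add lookup_single)
    from sum_point[OF this] show ?thesis unfolding NN_def by (simp add: lookup_add)
  qed
  moreover have "(Poly_Mapping.lookup m i + a i) div a i = Poly_Mapping.lookup m i div a i + 1"
    using assms by (simp add: div_add_self2)
  ultimately show ?thesis by linarith
qed

lemma NN_single: "a i > 0 \<Longrightarrow> NN a (Poly_Mapping.single i (a i)) = 1"
  using NN_add_single[of a i 0] by simp

lemma PI_eq: "PI a j = {f. Poly_Mapping.keys f \<subseteq> {m. j \<le> NN a m}}"
  unfolding PI_def by auto

lemma PI_ideal: "is_ideal (PI a j)"
  unfolding PI_eq
proof (rule keys_closed_ideal)
  fix m w assume "m \<in> {m. j \<le> NN a m}"
  then show "w + m \<in> {m. j \<le> NN a m}" using NN_add[of a w m] by auto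
qed

lemma PI_mult: "f \<in> PI a j \<Longrightarrow> g \<in> PI a l \<Longrightarrow> f * g \<in> PI a (j + l)"
  unfolding PI_def
proof safe
  fix m assume f: "\<forall>m\<in>Poly_Mapping.keys f. j \<le> NN a m" and g: "\<forall>m\<in>Poly_Mapping.keys g. l \<le> NN a m"
    and m: "m \<in> Poly_Mapping.keys (f * g)"
  then obtain x y where "m = x + y" "x \<in> Poly_Mapping.keys f" "y \<in> Poly_Mapping.keys g"
    using keys_mult[of f g] by blast
  then show "j + l \<le> NN a m" using f g NN_add[of a x y] by fastforce
qed

lemma prod_list_PI: "set xs \<subseteq> PI a 1 \<Longrightarrow> prod_list xs \<in> PI a (length xs)"
proof (induction xs)
  case Nil
  then show ?case by (simp add: PI_def)
next
  case (Cons x xs)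
  then show ?case using PI_mult[of x a 1 "prod_list xs" "length xs"] by simp
qed

lemma exists_big:
  assumes "1 \<le> NN a m"
  shows "\<exists>i. a i \<le> Poly_Mapping.lookup m i"
proof (rule ccontr)
  assume "\<not> ?thesis"
  then have "\<forall>v. Poly_Mapping.lookup m v div a v = 0" by (simp add: not_le)
  then show False using assms by (simp add: NN_def)
qed

lemma decompose:
  assumes "c \<le> Poly_Mapping.lookup (m :: 'v \<Rightarrow>\<^sub>0 nat) i"
  shows "\<exists>m'. m = m' + Poly_Mapping.single i c"
proof
  show "m = (m - Poly_Mapping.single i c) + Poly_Mapping.single i c"
    using assms by (intro poly_mapping_eqI) (auto simp: lookup_add lookup_minus lookup_single when_def)
qed

lemma var_pow_mult: "Poly_Mapping.single m 1 * var_pow i e = Poly_Mapping.single (m + Poly_Mapping.single i e) (1::'k::field)"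
  unfolding var_pow_def by (simp add: mult_single)

lemma keys_var_pow [simp]: "Poly_Mapping.keys (var_pow i e :: ('v, 'k::field) mpoly) = {Poly_Mapping.single i e}"
  unfolding var_pow_def by simp

lemma I_eq:
  fixes a :: "'v::finite \<Rightarrow> nat"
  assumes pos: "\<forall>i. a i > 0"
    and I: "I = ideal_gen (range (\<lambda>i. var_pow i (a i) :: ('v, 'k::field) mpoly))"
  shows "I = PI a 1"
proof
  show "I \<subseteq> PI a 1" unfolding I
    by (rule gen_least[OF PI_ideal]) (auto simp: PI_def NN_single pos)
next
  show "PI a 1 \<subseteq> I"
  proof
    fix f :: "('v, 'k) mpoly" assume f: "f \<in> PI a 1"
    show "f \<in> I"
    proof (rule monomial_criterion)
      show "is_ideal I" unfolding I by (rule is_ideal_gen)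
      show "\<forall>m\<in>Poly_Mapping.keys f. Poly_Mapping.single m 1 \<in> I"
      proof
        fix m assume "m \<in> Poly_Mapping.keys f"
        then have n1: "1 \<le> NN a m" using f unfolding PI_def by blast
        obtain i where ai: "a i \<le> Poly_Mapping.lookup m i" using exists_big[OF n1] by blast
        obtain m' where m': "m = m' + Poly_Mapping.single i (a i)" using decompose[OF ai] by blast
        have "var_pow i (a i) \<in> I" unfolding I using gen_subset[of "range (\<lambda>i. var_pow i (a i) :: ('v, 'k::field) mpoly)"] by blast
        moreover have "is_ideal I" unfolding I by (rule is_ideal_gen)
        ultimately have "Poly_Mapping.single m' 1 * var_pow i (a i) \<in> I"
          using ideal_mult by blast
        then show "Poly_Mapping.single m 1 \<in> I" unfolding m' var_pow_mult .
      qed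
    qed
  qed
qed

lemma pow_aux:
  fixes a :: "'v::finite \<Rightarrow> nat"
  assumes pos: "\<forall>i. a i > 0"
    and gens: "\<forall>i. var_pow i (a i) \<in> (I :: ('v, 'k::field) mpoly set)"
  shows "\<forall>m. k \<le> NN a m \<longrightarrow> (\<exists>w xs. length xs = k \<and> set xs \<subseteq> I \<and>
            Poly_Mapping.single m (1::'k) = Poly_Mapping.single w 1 * prod_list xs)"
proof (induction k)
  case 0
  show ?case
  proof (intro allI impI)
    fix m :: "'v \<Rightarrow>\<^sub>0 nat"
    have "length [] = (0::nat) \<and> set [] \<subseteq> I \<and>
            Poly_Mapping.single m (1::'k) = Poly_Mapping.single m 1 * prod_list []" by simp
    then show "\<exists>w xs. length xs = 0 \<and> set xs \<subseteq> I \<and>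
            Poly_Mapping.single m (1::'k) = Poly_Mapping.single w 1 * prod_list xs"
      by (intro exI[where x=m] exI[where x="[]"])
  qed
next
  case (Suc k)
  show ?case
  proof (intro allI impI)
    fix m assume m: "Suc k \<le> NN a m"
    then have n1: "1 \<le> NN a m" by simp
    obtain i where ai: "a i \<le> Poly_Mapping.lookup m i" using exists_big[OF n1] by blast
    obtain m' where m': "m = m' + Poly_Mapping.single i (a i)" using decompose[OF ai] by blast
    have "NN a m = NN a m' + 1" unfolding m' by (rule NN_add_single[OF pos[rule_format]])
    then have "k \<le> NN a m'" using m by simp
    from Suc.IH[rule_format, OF this] obtain w xs where w: "length xs = k" "set xs \<subseteq> I"
      "Poly_Mapping.single m' (1::'k) = Poly_Mapping.single w 1 * prod_list xs"
      by blast
    have "Poly_Mapping.single m (1::'k) = Poly_Mapping.single m' 1 * var_pow i (a i)"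
      unfolding m' var_pow_mult ..
    also have "\<dots> = Poly_Mapping.single w 1 * prod_list (var_pow i (a i) # xs)"
      unfolding w(3) by (simp only: prod_list.Cons mult.assoc mult.commute[of "prod_list xs"])
    finally have eq: "Poly_Mapping.single m (1::'k) = Poly_Mapping.single w 1 * prod_list (var_pow i (a i) # xs)" .
    have "length (var_pow i (a i) # xs) = Suc k" using w(1) by simp
    moreover have "set (var_pow i (a i) # xs) \<subseteq> I" using w(2) gens by simp
    ultimately show "\<exists>w xs. length xs = Suc k \<and> set xs \<subseteq> I \<and>
            Poly_Mapping.single m (1::'k) = Poly_Mapping.single w 1 * prod_list xs"
      using eq by (intro exI[where x=w] exI[where x="var_pow i (a i) # xs"] conjI)
  qed
qed

lemma pow_eq:
  fixes a :: "'v::finite \<Rightarrow> nat"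
  assumes pos: "\<forall>i. a i > 0"
    and I: "I = ideal_gen (range (\<lambda>i. var_pow i (a i) :: ('v, 'k::field) mpoly))"
  shows "ideal_pow I k = PI a k"
proof
  have I1: "I = PI a 1" using I_eq[OF pos I] .
  show "ideal_pow I k \<subseteq> PI a k"
    unfolding ideal_pow_def
  proof (rule gen_least[OF PI_ideal], rule subsetI)
    fix x assume "x \<in> {prod_list xs |xs. length xs = k \<and> set xs \<subseteq> I}"
    then obtain xs where xs: "x = prod_list xs \<and> length xs = k \<and> set xs \<subseteq> I"
      unfolding mem_Collect_eq by (elim exE)
    then have "prod_list xs \<in> PI a (length xs)" using prod_list_PI[of xs a] I1 by simp
    then show "x \<in> PI a k" using xs by simp
  qed
next
  have gens: "\<forall>i. var_pow i (a i) \<in> I" unfolding I using gen_subset[of "range (\<lambda>i. var_pow i (a i) :: ('v, 'k::field) mpoly)"] by blast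
  show "PI a k \<subseteq> ideal_pow I k"
  proof
    fix f :: "('v, 'k) mpoly" assume f: "f \<in> PI a k"
    show "f \<in> ideal_pow I k" unfolding ideal_pow_def
    proof (rule monomial_criterion[OF is_ideal_gen], rule ballI)
      fix m assume "m \<in> Poly_Mapping.keys f"
      then have km: "k \<le> NN a m" using f unfolding PI_def by blast
      from pow_aux[OF pos gens, rule_format, OF km] obtain w xs where w: "length xs = k" "set xs \<subseteq> I"
        "Poly_Mapping.single m (1::'k) = Poly_Mapping.single w 1 * prod_list xs"
        by blast
      have "prod_list xs = prod_list xs \<and> length xs = k \<and> set xs \<subseteq> I" using w(1,2) by simp
      then have "prod_list xs \<in> {prod_list xs |xs. length xs = k \<and> set xs \<subseteq> I}"
        by (intro CollectI exI[where x=xs])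
      then have "prod_list xs \<in> ideal_gen {prod_list xs |xs. length xs = k \<and> set xs \<subseteq> I}"
        by (rule subsetD[OF gen_subset])
      from ideal_mult[OF is_ideal_gen this, of "Poly_Mapping.single w 1"]
      show "Poly_Mapping.single m 1 \<in> ideal_gen {prod_list xs |xs. length xs = k \<and> set xs \<subseteq> I}"
        unfolding w(3) .
    qed
  qed
qed

lemma mon_deg_eq: "mon_deg (m :: 'v::finite \<Rightarrow>\<^sub>0 nat) = (\<Sum>v\<in>UNIV. Poly_Mapping.lookup m v)"
  unfolding mon_deg_def
  by (rule sum.mono_neutral_left) (auto simp: in_keys_iff)

lemma div_step1: "(a::nat) > 0 \<Longrightarrow> x div a < (x+1) div a \<Longrightarrow> x mod a = a - 1"
  by (auto simp: div_Suc mod_Suc dvd_eq_mod_eq_0 split: if_splits)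

lemma div_step2: "(a::nat) > 0 \<Longrightarrow> (x+1) div a \<le> x div a + 1"
  by (simp add: div_Suc)

lemma div_step3: "(a::nat) > 0 \<Longrightarrow> x mod a = a - 1 \<Longrightarrow> (x+1) div a = x div a + 1"
  by (metis Suc_diff_1 Suc_eq_plus1 div_Suc mod_Suc_eq mod_self)

lemma sum_bump:
  fixes u a :: "'v::finite \<Rightarrow> nat"
  shows "(\<Sum>v\<in>UNIV. (u v + (if v = i then 1 else 0)) div a v) + u i div a i
       = (\<Sum>v\<in>UNIV. u v div a v) + (u i + 1) div a i"
proof -
  have "\<forall>v. v \<noteq> i \<longrightarrow> (u v + (if v = i then 1 else 0)) div a v = u v div a v" by simp
  from sum_point[OF this] show ?thesis by simp
qed

lemma arith_min:
  fixes u a :: "'v::finite \<Rightarrow> nat"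
  assumes pos: "\<forall>i. a i > 0"
    and lt: "(\<Sum>v\<in>UNIV. u v div a v) < k + 1"
    and step: "\<forall>i. k + 1 \<le> (\<Sum>v\<in>UNIV. (u v + (if v = i then 1 else 0)) div a v)"
    and mn: "\<forall>i. a i0 \<le> a i"
  shows "(\<Sum>v\<in>UNIV. a v - 1) + k * a i0 \<le> (\<Sum>v\<in>UNIV. u v)"
proof -
  define N where "N = (\<Sum>v\<in>UNIV. u v div a v)"
  have modv: "u i mod a i = a i - 1" for i
  proof -
    have "u i div a i < (u i + 1) div a i"
      using sum_bump[of u i a] step[rule_format, of i] lt unfolding N_def by linarith
    then show ?thesis using div_step1 pos by blast
  qed
  have "k \<le> N"
    using sum_bump[of u i0 a] step[rule_format, of i0] div_step2[of "a i0" "u i0"] pos unfolding N_def by fastforce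
  have uv: "a i0 * (u v div a v) + (a v - 1) \<le> u v" for v
  proof -
    have "u v = a v * (u v div a v) + (a v - 1)" using modv[of v] by (metis div_mult_mod_eq mult.commute)
    moreover have "a i0 * (u v div a v) \<le> a v * (u v div a v)" using mn by simp
    ultimately show ?thesis by linarith
  qed
  have "(\<Sum>v\<in>UNIV. a v - 1) + k * a i0 \<le> (\<Sum>v\<in>UNIV. a v - 1) + N * a i0"
    using \<open>k \<le> N\<close> by simp
  also have "\<dots> = (\<Sum>v\<in>UNIV. a i0 * (u v div a v) + (a v - 1))"
    unfolding N_def by (simp add: sum.distrib sum_distrib_left mult.commute)
  also have "\<dots> \<le> (\<Sum>v\<in>UNIV. u v)"
    by (rule sum_mono) (rule uv)
  finally show ?thesis .
qed

lemma NN_single_gen: "NN a (Poly_Mapping.single i c) = c div a (i::'v::finite)"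
proof -
  have "\<forall>v. v \<noteq> i \<longrightarrow> Poly_Mapping.lookup (Poly_Mapping.single i c) v div a v = (\<lambda>v. 0::nat) v"
    by (auto simp: lookup_single)
  from sum_point[OF this] show ?thesis unfolding NN_def by simp
qed



lemma NN_bump: "NN a (m + Poly_Mapping.single i 1) =
   (\<Sum>v\<in>UNIV. (Poly_Mapping.lookup m v + (if v = i then 1 else 0)) div a v)"
  unfolding NN_def by (intro sum.cong refl) (auto simp: lookup_add lookup_single when_def)



lemma var_pow_power: "(var_pow i 1 :: ('v, 'k::field) mpoly) ^ e = var_pow i e"
proof (induction e)
  case 0
  then show ?case by (simp add: var_pow_def)
next
  case (Suc e)
  have h: "Poly_Mapping.single i 1 + Poly_Mapping.single i e = Poly_Mapping.single i (Suc e)"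
    unfolding single_add[symmetric] by simp
  have "(var_pow i 1 :: ('v, 'k::field) mpoly) ^ Suc e = var_pow i 1 * var_pow i e"
    using Suc by (simp only: power_Suc)
  also have "\<dots> = var_pow i (Suc e)"
    unfolding var_pow_def mult_single h by simp
  finally show ?case .
qed


lemma prime_pow: "prime_ideal P \<Longrightarrow> x ^ Suc e \<in> P \<Longrightarrow> x \<in> P"
proof (induction e)
  case 0
  then show ?case by simp
next
  case (Suc e)
  then show ?case unfolding prime_ideal_def by (metis power_Suc)
qed



lemma pm_plus_zero: "(l + q = (0::'v \<Rightarrow>\<^sub>0 nat)) \<longleftrightarrow> l = 0 \<and> q = 0"
proof
  assume h: "l + q = 0"
  have "\<forall>v. Poly_Mapping.lookup l v + Poly_Mapping.lookup q v = 0"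
    using h by (metis lookup_add lookup_zero)
  then show "l = 0 \<and> q = 0" by (auto intro!: poly_mapping_eqI)
qed simp



lemma lookup_mult_zero:
  "Poly_Mapping.lookup (f * g :: ('v, 'k::field) mpoly) 0 = Poly_Mapping.lookup f 0 * Poly_Mapping.lookup g 0"
proof -
  have inner: "(\<Sum>q. Poly_Mapping.lookup g q when 0 = l + q) = (Poly_Mapping.lookup g 0 when l = 0)" for l
  proof (cases "l = 0")
    case True
    then show ?thesis by simp
  next
    case False
    then have "(\<lambda>q. Poly_Mapping.lookup g q when 0 = l + q) = (\<lambda>q. 0)"
      by (auto simp: pm_plus_zero[of l] eq_commute[of 0])
    note h = this
    show ?thesis unfolding h using False by simp
  qed
  have "Poly_Mapping.lookup (f * g) 0 = (\<Sum>l. Poly_Mapping.lookup f l * (Poly_Mapping.lookup g 0 when l = 0))"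
    unfolding lookup_mult inner ..
  also have "\<dots> = (\<Sum>l. (Poly_Mapping.lookup f l * Poly_Mapping.lookup g 0) when l = 0)"
    by (intro Sum_any.cong) (simp add: when_def)
  also have "\<dots> = Poly_Mapping.lookup f 0 * Poly_Mapping.lookup g 0"
    by (rule Sum_any_when_equal)
  finally show ?thesis .
qed



definition P0 :: "('v, 'k::field) mpoly set" where
  "P0 = {g. Poly_Mapping.lookup g 0 = 0}"



lemma P0_prime: "prime_ideal (P0 :: ('v, 'k::field) mpoly set)"
  unfolding prime_ideal_def
proof (intro conjI allI impI)
  have "P0 = {g :: ('v, 'k) mpoly. Poly_Mapping.keys g \<subseteq> {m. m \<noteq> 0}}"
    unfolding P0_def by (auto simp: in_keys_iff)
  moreover have "is_ideal {g :: ('v, 'k) mpoly. Poly_Mapping.keys g \<subseteq> {m. m \<noteq> 0}}"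
    by (rule keys_closed_ideal) (simp add: pm_plus_zero)
  ultimately show "is_ideal (P0 :: ('v, 'k) mpoly set)" by simp
  have "(1 :: ('v, 'k) mpoly) \<notin> P0" unfolding P0_def by simp
  then show "(P0 :: ('v, 'k) mpoly set) \<noteq> UNIV" by blast
  fix x y :: "('v, 'k) mpoly"
  assume "x * y \<in> P0"
  then show "x \<in> P0 \<or> y \<in> P0" unfolding P0_def by (simp add: lookup_mult_zero)
qed

definition Uf :: "('v::finite \<Rightarrow> nat) \<Rightarrow> 'v \<Rightarrow> nat \<Rightarrow> 'v \<Rightarrow> nat" where
  "Uf a i0 k v = a v - 1 + (if v = i0 then k * a v else 0)"

definition UU :: "('v::finite \<Rightarrow> nat) \<Rightarrow> 'v \<Rightarrow> nat \<Rightarrow> ('v \<Rightarrow>\<^sub>0 nat)" where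
  "UU a i0 k = Abs_poly_mapping (Uf a i0 k)"

lemma lookup_UU: "Poly_Mapping.lookup (UU a i0 k) = Uf a i0 k"
  unfolding UU_def by (rule lookup_Abs_poly_mapping) simp

lemma Uf_div: "a v > 0 \<Longrightarrow> Uf a i0 k v div a v = (if v = i0 then k else 0)"
proof -
  assume p: "a v > 0"
  have "(a v - 1 + c * a v) div a v = c" for c
  proof -
    have "(a v - 1 + c * a v) div a v = c + (a v - 1) div a v"
      by (rule div_mult_self1) (use p in simp)
    moreover have "(a v - 1) div a v = 0" using p by simp
    ultimately show ?thesis by simp
  qed
  from this[of k] this[of 0] show ?thesis unfolding Uf_def by auto
qed

lemma Uf_mod: "a v > 0 \<Longrightarrow> Uf a i0 k v mod a v = a v - 1"
proof -
  assume p: "a v > 0"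
  have "(a v - 1 + c * a v) mod a v = a v - 1" for c
  proof -
    have "(a v - 1 + c * a v) mod a v = (a v - 1) mod a v" by (rule mod_mult_self1)
    then show ?thesis using p by simp
  qed
  from this[of k] this[of 0] show ?thesis unfolding Uf_def by auto
qed

lemma NN_UU:
  assumes pos: "\<forall>i. a i > 0"
  shows "NN a (UU a i0 k) = k"
proof -
  have "NN a (UU a i0 k) = (\<Sum>v\<in>UNIV. (if v = i0 then k else 0))"
    unfolding NN_def lookup_UU by (intro sum.cong refl Uf_div) (use pos in blast)
  then show ?thesis by simp
qed

lemma NN_UU_bump:
  assumes pos: "\<forall>i. a i > 0"
  shows "NN a (UU a i0 k + Poly_Mapping.single i 1) = k + 1"
proof -
  have "NN a (UU a i0 k + Poly_Mapping.single i 1) + Uf a i0 k i div a i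
     = NN a (UU a i0 k) + (Uf a i0 k i + 1) div a i"
    unfolding NN_bump using sum_bump[of "Uf a i0 k" i a] unfolding NN_def lookup_UU .
  moreover have "(Uf a i0 k i + 1) div a i = Uf a i0 k i div a i + 1"
    by (rule div_step3[OF pos[rule_format] Uf_mod[OF pos[rule_format]]])
  ultimately show ?thesis using NN_UU[OF pos, of i0 k] by linarith
qed

lemma mon_deg_UU:
  "mon_deg (UU a i0 k) = (\<Sum>v\<in>UNIV. a v - 1) + k * a (i0::'v::finite)"
  unfolding mon_deg_eq lookup_UU Uf_def by (simp add: sum.distrib)

lemma nonzero_exists: "(m :: 'v \<Rightarrow>\<^sub>0 nat) \<noteq> 0 \<Longrightarrow> \<exists>i. 1 \<le> Poly_Mapping.lookup m i"
proof (rule ccontr)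
  assume m: "m \<noteq> 0" and "\<not> (\<exists>i. 1 \<le> Poly_Mapping.lookup m i)"
  then have "\<forall>i. Poly_Mapping.lookup m i = 0" by (simp add: not_le)
  then have "m = 0" by (intro poly_mapping_eqI) simp
  with m show False by contradiction
qed

lemma colon_UU:
  fixes a :: "'v::finite \<Rightarrow> nat"
  assumes pos: "\<forall>i. a i > 0"
  shows "ideal_colon (PI a (k+1) :: ('v, 'k::field) mpoly set) (Poly_Mapping.single (UU a i0 k) 1) = P0"
proof (rule set_eqI)
  fix g :: "('v, 'k) mpoly"
  let ?U = "UU a i0 k"
  have "g \<in> ideal_colon (PI a (k+1)) (Poly_Mapping.single ?U 1) \<longleftrightarrow>
      (\<forall>m\<in>Poly_Mapping.keys g. k + 1 \<le> NN a (?U + m))"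
    unfolding ideal_colon_def PI_def mem_Collect_eq mult.commute[of g] keys_single_mult by blast
  also have "\<dots> \<longleftrightarrow> g \<in> P0"
  proof
    assume h: "\<forall>m\<in>Poly_Mapping.keys g. k + 1 \<le> NN a (?U + m)"
    show "g \<in> P0"
    proof (rule ccontr)
      assume "g \<notin> P0"
      then have "0 \<in> Poly_Mapping.keys g" unfolding P0_def by (simp add: in_keys_iff)
      then have "k + 1 \<le> NN a (?U + 0)" using h by blast
      then show False using NN_UU[OF pos, of i0 k] by simp
    qed
  next
    assume "g \<in> P0"
    then have g0: "Poly_Mapping.lookup g 0 = 0" unfolding P0_def by simp
    show "\<forall>m\<in>Poly_Mapping.keys g. k + 1 \<le> NN a (?U + m)"
    proof
      fix m assume "m \<in> Poly_Mapping.keys g"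
      then have "m \<noteq> 0" using g0 by (auto simp: in_keys_iff)
      then obtain i where i: "1 \<le> Poly_Mapping.lookup m i" using nonzero_exists by blast
      have "NN a (?U + Poly_Mapping.single i 1) \<le> NN a (?U + m)"
        by (rule NN_mono) (use i in \<open>auto simp: lookup_add lookup_single when_def\<close>)
      then show "k + 1 \<le> NN a (?U + m)" using NN_UU_bump[OF pos, of i0 k i] by simp
    qed
  qed
  finally show "g \<in> ideal_colon (PI a (k+1)) (Poly_Mapping.single ?U 1) \<longleftrightarrow> g \<in> P0" .
qed

lemma vnum_lower:
  fixes a :: "'v::finite \<Rightarrow> nat"
  assumes pos: "\<forall>i. a i > 0" and mn: "\<forall>i. a i0 \<le> a i"
    and hom: "homogeneous_of d f" and PA: "P \<in> Ass (PI a (k+1))"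
    and col: "ideal_colon (PI a (k+1)) f = (P :: ('v, 'k::field) mpoly set)"
  shows "(\<Sum>v\<in>UNIV. a v - 1) + k * a i0 \<le> d"
proof -
  let ?J = "PI a (k+1) :: ('v, 'k) mpoly set"
  have pr: "prime_ideal P" using PA unfolding Ass_def by blast
  then have idP: "is_ideal P" and nU: "P \<noteq> UNIV" unfolding prime_ideal_def by blast+
  have one: "(1 :: ('v, 'k) mpoly) \<notin> P"
  proof
    assume "1 \<in> P"
    then have "\<forall>r. r * 1 \<in> P" using idP unfolding is_ideal_def by blast
    then have "P = UNIV" by auto
    with nU show False by contradiction
  qed
  have fJ: "f \<notin> ?J"
  proof
    assume "f \<in> ?J"
    then have "1 * f \<in> ?J" by simp
    then have "1 \<in> P" using col unfolding ideal_colon_def by blast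
    with one show False by contradiction
  qed
  then obtain u where u: "u \<in> Poly_Mapping.keys f" "NN a u < k + 1"
    unfolding PI_def by (auto simp: not_le)
  have JP: "g \<in> P" if "g \<in> ?J" for g
  proof -
    have "f * g \<in> ?J" by (rule ideal_mult[OF PI_ideal that])
    then have "g * f \<in> ?J" by (simp add: mult.commute)
    then show ?thesis using col unfolding ideal_colon_def by blast
  qed
  have step: "k + 1 \<le> NN a (u + Poly_Mapping.single i 1)" for i
  proof -
    obtain e where e: "(k+1) * a i = Suc e" using pos by (metis add_is_0 mult_is_0 not0_implies_Suc not_gr0 one_neq_zero)
    have "var_pow i ((k+1) * a i) \<in> ?J"
      unfolding PI_def using pos by (simp add: NN_single_gen)
    then have "(var_pow i 1 :: ('v, 'k) mpoly) ^ Suc e \<in> P"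
      using JP unfolding var_pow_power e by blast
    then have "var_pow i 1 \<in> P" by (rule prime_pow[OF pr])
    then have "var_pow i 1 * f \<in> ?J" using col unfolding ideal_colon_def by blast
    moreover have "Poly_Mapping.single i 1 + u \<in> Poly_Mapping.keys (var_pow i 1 * f)"
      unfolding var_pow_def keys_single_mult using u(1) by blast
    ultimately show ?thesis unfolding PI_def by (simp add: add.commute)
  qed
  have "(\<Sum>v\<in>UNIV. a v - 1) + k * a i0 \<le> (\<Sum>v\<in>UNIV. Poly_Mapping.lookup u v)"
  proof (rule arith_min[OF pos _ _ mn])
    show "(\<Sum>v\<in>UNIV. Poly_Mapping.lookup u v div a v) < k + 1" using u(2) unfolding NN_def .
    show "\<forall>i. k + 1 \<le> (\<Sum>v\<in>UNIV. (Poly_Mapping.lookup u v + (if v = i then 1 else 0)) div a v)"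
      using step unfolding NN_bump by blast
  qed
  moreover have "mon_deg u = d" using hom u(1) unfolding homogeneous_of_def by blast
  ultimately show ?thesis unfolding mon_deg_eq by simp
qed

lemma vnum:
  fixes a :: "'v::finite \<Rightarrow> nat"
  assumes pos: "\<forall>i. a i > 0" and mn: "\<forall>i. a i0 \<le> a i"
  shows "v_number (PI a (k+1) :: ('v, 'k::field) mpoly set) = (\<Sum>v\<in>UNIV. a v - 1) + k * a i0"
  unfolding v_number_def
proof (rule Least_equality)
  let ?f = "Poly_Mapping.single (UU a i0 k) (1::'k)"
  have hom: "homogeneous_of ((\<Sum>v\<in>UNIV. a v - 1) + k * a i0) ?f"
    unfolding homogeneous_of_def using mon_deg_UU[of a i0 k] by simp
  have col: "ideal_colon (PI a (k+1) :: ('v, 'k::field) mpoly set) ?f = P0"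
    by (rule colon_UU[OF pos])
  have ass: "P0 \<in> Ass (PI a (k+1) :: ('v, 'k::field) mpoly set)"
    unfolding Ass_def using P0_prime col by blast
  show "\<exists>f P. homogeneous_of ((\<Sum>v\<in>UNIV. a v - 1) + k * a i0) f \<and> P \<in> Ass (PI a (k+1) :: ('v, 'k::field) mpoly set) \<and>
      ideal_colon (PI a (k+1)) f = P"
    using hom ass col by blast
next
  fix d assume "\<exists>f P. homogeneous_of d f \<and> P \<in> Ass (PI a (k+1) :: ('v, 'k::field) mpoly set) \<and>
      ideal_colon (PI a (k+1)) f = P"
  then obtain f P where "homogeneous_of d f" "P \<in> Ass (PI a (k+1) :: ('v, 'k::field) mpoly set)"
      "ideal_colon (PI a (k+1)) f = P" by blast
  then show "(\<Sum>v\<in>UNIV. a v - 1) + k * a i0 \<le> d" by (rule vnum_lower[OF pos mn])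
qed

lemma alpha_PI:
  fixes a :: "'v::finite \<Rightarrow> nat"
  assumes pos: "\<forall>i. a i > 0" and mn: "\<forall>i. a i0 \<le> a i"
  shows "alpha_ideal (PI a 1 :: ('v, 'k::field) mpoly set) = a i0"
  unfolding alpha_ideal_def
proof (rule Least_equality)
  have "var_pow i0 (a i0) \<in> (PI a 1 :: ('v, 'k::field) mpoly set)"
    unfolding PI_def using pos by (simp add: NN_single)
  moreover have "var_pow i0 (a i0) \<noteq> (0 :: ('v, 'k::field) mpoly)"
    unfolding var_pow_def by (metis lookup_single_eq lookup_zero zero_neq_one)
  moreover have "homogeneous_of (a i0) (var_pow i0 (a i0) :: ('v, 'k::field) mpoly)"
    unfolding homogeneous_of_def mon_deg_def using pos by simp
  ultimately show "\<exists>f\<in>(PI a 1 :: ('v, 'k::field) mpoly set). f \<noteq> 0 \<and> homogeneous_of (a i0) f" by blast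
next
  fix d assume "\<exists>f\<in>(PI a 1 :: ('v, 'k::field) mpoly set). f \<noteq> 0 \<and> homogeneous_of d f"
  then obtain f :: "('v, 'k) mpoly" where f: "f \<in> PI a 1" "f \<noteq> 0" "homogeneous_of d f" by blast
  then obtain m where m: "m \<in> Poly_Mapping.keys f" by fastforce
  then have "1 \<le> NN a m" using f(1) unfolding PI_def by blast
  then obtain i where i: "a i \<le> Poly_Mapping.lookup m i" using exists_big by blast
  have "Poly_Mapping.lookup m i \<le> (\<Sum>v\<in>UNIV. Poly_Mapping.lookup m v)"
    by (rule member_le_sum) auto
  moreover have "mon_deg m = d" using f(3) m unfolding homogeneous_of_def by blast
  ultimately show "a i0 \<le> d" using i mn[rule_format, of i] unfolding mon_deg_eq by linarith
qed

theorem proposition4p13: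
  fixes a :: "'v::finite \<Rightarrow> nat" and n :: nat
  assumes "\<forall>i. a i > 0"
    and "n \<ge> 1"
    and "I = ideal_gen (range (\<lambda>i. var_pow i (a i) :: ('v, 'k::field) mpoly))"
  shows "v_number (ideal_pow I (n + 1)) = v_number I + n * alpha_ideal I"
proof -
  obtain i0 where "True \<and> (\<forall>y. True \<longrightarrow> a i0 \<le> a y)"
    using ex_has_least_nat[of "\<lambda>_. True" undefined a] by blast
  then have mn: "\<forall>i. a i0 \<le> a i" by blast
  have I1: "I = PI a 1" by (rule I_eq[OF assms(1) assms(3)])
  have Ip: "ideal_pow I (n + 1) = PI a (n + 1)" by (rule pow_eq[OF assms(1) assms(3)])
  have "v_number (PI a (n + 1) :: ('v, 'k) mpoly set) = (\<Sum>v\<in>UNIV. a v - 1) + n * a i0"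
    by (rule vnum[OF assms(1) mn])
  moreover have "v_number (PI a (0 + 1) :: ('v, 'k) mpoly set) = (\<Sum>v\<in>UNIV. a v - 1) + 0 * a i0"
    by (rule vnum[OF assms(1) mn])
  moreover have "alpha_ideal (PI a 1 :: ('v, 'k) mpoly set) = a i0"
    by (rule alpha_PI[OF assms(1) mn])
  moreover have Ip': "ideal_pow (PI a 1 :: ('v, 'k) mpoly set) (n + 1) = PI a (n + 1)" using Ip I1 by simp
  ultimately show ?thesis unfolding I1 Ip' by simp
qed

end
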